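(* Let $\langle (x_n,y_n)\rangle_{n\in\mathbb{N}}$ be the solutions in $\mathbb{N}^2$ of $x^2-19\,y^2=1$, indexed so that $y_0<y_1<\cdots$. Suppose $n>0$ is not a power of $2$ and $y_n/39$ is representable. Then the equation \[ 19\cdot 3^2\cdot (r^2+r\,s+5\,s^2)^2 - 13^2\cdot (v^2+v\,u+5\,u^2)^2 = 2 \] has an integer solution $\bar r,\bar s,\bar v,\bar u$ with $\bar r\neq\pm1$ or $\bar s\neq 0$, such that $39\,(\bar r^2+\bar r\bar s+5\bar s^2)(\bar v^2+\bar v\bar u+5\bar u^2)\mid y_n$.
   Context: $(x_0,y_0)=(1,0)$, $(x_1,y_1)=(170,39)$, $x_n+y_n\sqrt{19}=(170+39\sqrt{19})^n$. A non-negative integer $N$ is called representable if $N=w^2+w\,t+5\,t^2$ for some $w,t\in\mathbb{Z}$. *)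

theory Defs
  imports Main
begin

text \<open>Solutions of x^2 - 19 y^2 = 1: x_n + y_n sqrt 19 = (170 + 39 sqrt 19)^n,
  i.e. (x_0,y_0) = (1,0) and multiplication by 170 + 39 sqrt 19.\<close>
fun pell19 :: "nat \<Rightarrow> int \<times> int" where
  "pell19 0 = (1, 0)"
| "pell19 (Suc n) = (let (x, y) = pell19 n in (170 * x + 19 * 39 * y, 39 * x + 170 * y))"

definition xn :: "nat \<Rightarrow> int" where "xn n = fst (pell19 n)"
definition yn :: "nat \<Rightarrow> int" where "yn n = snd (pell19 n)"

definition representable :: "int \<Rightarrow> bool" where
  "representable N \<longleftrightarrow> N \<ge> 0 \<and> (\<exists>w t :: int. N = w^2 + w * t + 5 * t^2)"

end

theory Submission imports Defs "HOL-Computational_Algebra.Primes" begin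

definition R :: "int \<Rightarrow> bool" where "R N \<longleftrightarrow> (\<exists>w t :: int. N = w^2 + w * t + 5 * t^2)"

lemma R_mult: assumes "R a" "R b" shows "R (a*b)"
proof -
  obtain w1 t1 w2 t2 where "a = w1^2 + w1*t1 + 5*t1^2" "b = w2^2 + w2*t2 + 5*t2^2"
    using assms unfolding R_def by blast
  then have "a*b = (w1*w2 - 5*t1*t2)^2 + (w1*w2 - 5*t1*t2)*(w1*t2+t1*w2+t1*t2) + 5*(w1*t2+t1*w2+t1*t2)^2"
    by (simp add: algebra_simps power2_eq_square)
  then show ?thesis unfolding R_def by blast
qed

lemma R_sq: "R (p^2)" unfolding R_def by (rule exI[of _ p], rule exI[of _ 0]) simp

lemma reduced:
  fixes a b c :: int
  assumes "\<bar>b\<bar> \<le> a" "a \<le> c" "4*a*c - b^2 = 19" "a > 0"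
  shows "a = 1 \<and> c = 5 \<and> (b = 1 \<or> b = -1)"
proof -
  have "b^2 \<le> a^2" using assms(1) by (metis abs_le_square_iff abs_of_pos assms(4))
  moreover have "a*a \<le> a*c" using assms by simp
  ultimately have h3: "3*(a*a) \<le> 19" using assms(3) by (simp add: power2_eq_square)
  have "a \<le> 2"
  proof (rule ccontr)
    assume "\<not> a \<le> 2" then have "3 \<le> a" by simp
    then have "3*3 \<le> a*a" using \<open>3 \<le> a\<close> by (intro mult_mono) auto
    then show False using h3 by simp
  qed
  then have "a = 1 \<or> a = 2" using assms(4) by auto
  have "b \<ge> -2" "b \<le> 2" using assms(1) \<open>a \<le> 2\<close> by auto
  then have hb: "b = -2 \<or> b = -1 \<or> b = 0 \<or> b = 1 \<or> b = 2" by arith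
  define q where "q = b*b"
  have q: "q = 4 \<or> q = 1 \<or> q = 0" using hb unfolding q_def by auto
  have q1: "q = 1 \<Longrightarrow> b = 1 \<or> b = -1" using hb unfolding q_def by auto
  have eq: "4*a*c = 19 + q" using assms(3) unfolding q_def by (simp add: power2_eq_square)
  show ?thesis
  proof (cases "a = 1")
    case True
    then have "4*c = 19 + q" using eq by simp
    then have "q = 1" "c = 5" using q by presburger+
    then show ?thesis using q1 True by simp
  next
    case False
    then have "a = 2" using \<open>a = 1 \<or> a = 2\<close> by simp
    then have "8*c = 19 + q" using eq by simp
    then have False using q by presburger
    then show ?thesis ..
  qed
qed

lemma L1:
  fixes a :: int
  shows "4*a*c - b^2 = 19 \<Longrightarrow> a > 0 \<Longrightarrow> R (a*x^2 + b*x*y + c*y^2)"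
proof (induction "nat a" arbitrary: a b c x y rule: less_induct)
  case less
  define k where "k = (if b mod (2*a) > a then -(b div (2*a)) - 1 else -(b div (2*a)))"
  define b1 where "b1 = b + 2*a*k"
  define c1 where "c1 = a*k^2 + b*k + c"
  define X where "X = x - k*y"
  define q where "q = b div (2*a)"
  define r where "r = b mod (2*a)"
  have m: "b = 2*a*q + r" unfolding q_def r_def by simp
  have r: "0 \<le> r" "r < 2*a" unfolding r_def using less.prems by auto
  have hb: "\<bar>b1\<bar> \<le> a"
  proof (cases "r > a")
    case True
    then have "b1 = b + 2*a*(-q - 1)" unfolding b1_def k_def q_def r_def by simp
    also have "\<dots> = r - 2*a" using m by (simp add: algebra_simps)
    finally show ?thesis using r True by simp
  next
    case False
    then have "b1 = b + 2*a*(-q)" unfolding b1_def k_def q_def r_def by simp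
    also have "\<dots> = r" using m by (simp add: algebra_simps)
    finally show ?thesis using r False by simp
  qed
  have d: "4*a*c1 - b1^2 = 19" unfolding c1_def b1_def using less.prems(1)
    by (simp add: algebra_simps power2_eq_square)
  have v: "a*x^2 + b*x*y + c*y^2 = a*X^2 + b1*X*y + c1*y^2"
    unfolding X_def b1_def c1_def by (simp add: algebra_simps power2_eq_square)
  show ?case
  proof (cases "a \<le> c1")
    case True
    with reduced[OF hb True d less.prems(2)] have "a = 1" "c1 = 5" "b1 = 1 \<or> b1 = -1" by auto
    then show ?thesis unfolding v R_def
    proof (elim disjE)
      assume "b1 = 1" then show "\<exists>w t. a * X\<^sup>2 + b1 * X * y + c1 * y\<^sup>2 = w\<^sup>2 + w * t + 5 * t\<^sup>2"
        using \<open>a = 1\<close> \<open>c1 = 5\<close> by (intro exI[of _ X] exI[of _ y]) simp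
    next
      assume "b1 = -1" then show "\<exists>w t. a * X\<^sup>2 + b1 * X * y + c1 * y\<^sup>2 = w\<^sup>2 + w * t + 5 * t\<^sup>2"
        using \<open>a = 1\<close> \<open>c1 = 5\<close> by (intro exI[of _ X] exI[of _ "-y"]) simp
    qed
  next
    case False
    have "0 \<le> b1^2" by simp
    then have "0 < 4*a*c1" using d by linarith
    then have "0 < a*c1" by simp
    then have "c1 > 0" using less.prems(2) by (simp add: zero_less_mult_iff)
    have lt: "nat c1 < nat a" using False \<open>c1 > 0\<close> by simp
    have d': "4 * c1 * a - b1^2 = 19" using d by (simp add: algebra_simps)
    have "R (c1 * y\<^sup>2 + b1 * y * X + a * X\<^sup>2)"
      by (rule less.hyps[where ?a=c1 and ?b=b1 and ?c=a and ?x=y and ?y=X, OF lt d' \<open>c1 > 0\<close>])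
    then show ?thesis unfolding v by (simp add: algebra_simps)
  qed
qed

lemma L2:
  fixes w t a m :: int
  assumes "coprime w t" "a > 0" "w^2 + w*t + 5*t^2 = a*m"
  shows "R a"
proof -
  obtain u v where "u*w + v*t = gcd w t" using bezout_int by blast
  then have uv: "w*u - t*(-v) = 1" using assms(1) by (simp add: algebra_simps)
  define p where "p = -v"
  define B where "B = 2*w*p + w*u + t*p + 10*t*u"
  have "B^2 - 4*(w^2 + w*t + 5*t^2)*(p^2+p*u+5*u^2) = -19*(w*u - t*p)^2"
    unfolding B_def by (simp add: algebra_simps power2_eq_square)
  moreover have "(w*u - t*p)^2 = 1" using uv unfolding p_def by simp
  moreover have "4*a*(m*(p^2+p*u+5*u^2)) = 4*(w^2 + w*t + 5*t^2)*(p^2+p*u+5*u^2)"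
    using assms(3) by (simp add: algebra_simps)
  ultimately have "4*a*(m*(p^2+p*u+5*u^2)) - B^2 = 19" by linarith
  from L1[OF this assms(2), of 1 0] show ?thesis by simp
qed


lemma L3:
  fixes N a b :: int
  shows "N = a*b \<Longrightarrow> a > 0 \<Longrightarrow> b > 0 \<Longrightarrow> coprime a b \<Longrightarrow> R N \<Longrightarrow> R a"
proof (induction "nat N" arbitrary: N a b rule: less_induct)
  case less
  obtain w t where N: "N = w^2+w*t+5*t^2" using less.prems(5) unfolding R_def by blast
  show ?case
  proof (cases "coprime w t")
    case True
    have "w^2+w*t+5*t^2 = a*b" using N less.prems(1) by simp
    then show ?thesis using L2[OF True less.prems(2)] by blast
  next
    case False
    have "gcd w t \<noteq> 1" using False by (simp add: coprime_iff_gcd_eq_1)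
    then have "\<bar>gcd w t\<bar> \<noteq> 1" by simp
    then obtain p where p: "prime p" "p dvd gcd w t" by (rule prime_factor_int)
    have pw: "p dvd w" using p(2) by (rule dvd_trans) simp
    have pt: "p dvd t" using p(2) by (rule dvd_trans) simp
    obtain w' where w': "w = p*w'" using pw by (rule dvdE)
    obtain t' where t': "t = p*t'" using pt by (rule dvdE)
    define N' where "N' = w'^2+w'*t'+5*t'^2"
    have RN': "R N'" unfolding R_def N'_def by blast
    have NN: "N = p^2 * N'" unfolding N N'_def w' t' by (simp add: algebra_simps power2_eq_square)
    have p1: "p > 1" using p(1) by (rule prime_gt_1_int)
    have p2: "p^2 > 1" using p1 by (simp add: one_less_power)
    have p0: "p^2 > 0" using p2 by linarith
    have "N > 0" using less.prems(1,2,3) by simp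
    then have "0 < p^2 * N'" using NN by simp
    then have N'0: "N' > 0" using p0 by (rule zero_less_mult_pos)
    have "N' * 1 < N' * p^2" using p2 N'0 by (rule mult_strict_left_mono)
    then have "N' < N" unfolding NN by (simp add: mult.commute)
    then have lt: "nat N' < nat N" using N'0 by simp
    have pnu: "\<not> is_unit p" using p(1) not_prime_unit by blast
    show ?thesis
    proof (cases "p dvd a")
      case True
      have "\<not> p dvd b" using coprime_common_divisor[OF less.prems(4) True] pnu by blast
      then have "coprime p b" using p(1) prime_imp_coprime by blast
      then have cb: "coprime (p^2) b" by simp
      have "p^2 dvd a*b" using NN less.prems(1) by simp
      then have "p^2 dvd a" using cb coprime_dvd_mult_left_iff by blast
      then obtain a' where a': "a = p^2 * a'" by (rule dvdE)
      have "p^2 * N' = p^2 * (a' * b)" by (metis NN less.prems(1) a' mult.assoc)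
      then have N'ab: "N' = a' * b" using p0 by auto
      have "0 < p^2 * a'" using less.prems(2) a' by simp
      then have "a' > 0" using p0 by (rule zero_less_mult_pos)
      moreover have "coprime a' b" using less.prems(4) a' by simp
      ultimately have "R a'" using less.hyps[OF lt N'ab] less.prems(3) RN' by blast
      then show ?thesis unfolding a' using R_mult R_sq by blast
    next
      case False
      then have "coprime p a" using p(1) prime_imp_coprime by blast
      then have ca: "coprime a (p^2)" by (simp add: coprime_commute)
      have "a dvd p^2 * N'" using NN less.prems(1) by (metis dvd_triv_left)
      then have "a dvd N'" using ca coprime_dvd_mult_right_iff by blast
      then obtain b' where b': "N' = a * b'" by (rule dvdE)
      have "a * b = a * (p^2 * b')" using NN less.prems(1) b' by (simp add: algebra_simps)
      then have bb: "b = p^2 * b'" using less.prems(2) by simp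
      have "0 < p^2 * b'" using less.prems(3) bb by simp
      then have "b' > 0" using p0 by (rule zero_less_mult_pos)
      moreover have "coprime a b'" using less.prems(4) bb by simp
      ultimately show ?thesis using less.hyps[OF lt b'] less.prems(2) RN' by blast
    qed
  qed
qed

lemma pell_Suc: "xn (Suc n) = 170*xn n + 741*yn n" "yn (Suc n) = 39*xn n + 170*yn n"
  by (simp_all add: xn_def yn_def case_prod_beta Let_def)

lemma pell_0: "xn 0 = 1" "yn 0 = 0" by (simp_all add: xn_def yn_def)

lemma pell_add: "xn (m+n) = xn m * xn n + 19 * yn m * yn n \<and> yn (m+n) = xn m * yn n + yn m * xn n"
  by (induction n) (simp_all add: pell_Suc pell_0 algebra_simps)

lemma pell_double: "yn (2*m) = 2 * xn m * yn m"
proof -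
  have "yn (m+m) = 2*xn m*yn m" using pell_add[of m m] by (simp add: algebra_simps)
  then show ?thesis by (metis mult_2)
qed

lemma pell_eq: "xn n^2 - 19 * yn n^2 = 1"
  by (induction n) (simp_all add: pell_Suc pell_0 algebra_simps power2_eq_square)

lemma pell_pos: "xn n > 0 \<and> yn n \<ge> 0"
  by (induction n) (simp_all add: pell_Suc pell_0 add_pos_nonneg)

lemma yn_pos: "n > 0 \<Longrightarrow> yn n > 0"
  using pell_pos[of "n - 1"] pell_Suc(2)[of "n - 1"] by (cases n) (auto simp: add_pos_nonneg)

fun AB :: "nat \<Rightarrow> int \<times> int" where
  "AB 0 = (1, 1)"
| "AB (Suc k) = (170 * fst (AB k) + 169 * snd (AB k), 171 * fst (AB k) + 170 * snd (AB k))"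

lemma AB_props: "171 * fst (AB k)^2 - 169 * snd (AB k)^2 = 2 \<and> odd (fst (AB k)) \<and> odd (snd (AB k))
   \<and> fst (AB k) \<ge> 1 \<and> snd (AB k) \<ge> 1"
  by (induction k) (auto simp: algebra_simps power2_eq_square)

lemma AB_big: "fst (AB (Suc k)) \<ge> 339"
  using AB_props[of k] by simp

lemma AB_y: "2 * xn (2*k+1) = 171 * fst (AB k)^2 + 169 * snd (AB k)^2 \<and> yn (2*k+1) = 39 * fst (AB k) * snd (AB k)"
proof (induction k)
  case 0
  then show ?case by (simp add: pell_Suc pell_0)
next
  case (Suc k)
  have e: "2*(Suc k)+1 = Suc (Suc (2*k+1))" by simp
  have x: "2 * xn (2*(Suc k)+1) = 57799 * (2 * xn (2*k+1)) + 503880 * yn (2*k+1)"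
    unfolding e by (simp add: pell_Suc algebra_simps)
  have y: "yn (2*(Suc k)+1) = 6630 * (2 * xn (2*k+1)) + 57799 * yn (2*k+1)"
    unfolding e by (simp add: pell_Suc algebra_simps)
  show ?case unfolding x y using Suc by (simp add: algebra_simps power2_eq_square)
qed

lemma AB_coprime: "coprime (fst (AB k)) (snd (AB k))"
proof (rule coprimeI)
  fix c assume c: "c dvd fst (AB k)" "c dvd snd (AB k)"
  have "c dvd 171 * fst (AB k)^2 - 169 * snd (AB k)^2" using c by (simp add: power2_eq_square)
  then have c2: "c dvd 2" using AB_props[of k] by simp
  obtain j where "fst (AB k) = 2*j+1" using AB_props[of k] oddE by blast
  then have "c dvd 2*j+1" using c by simp
  moreover have "c dvd 2*j" using c2 by simp
  ultimately have "c dvd 1" by (metis add_diff_cancel_left' dvd_diff)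
  then show "is_unit c" by simp
qed

lemma tower:
  fixes C :: int
  assumes "odd C" "C dvd yn d"
  shows "\<exists>M. yn (2^a*d) = yn d * M \<and> coprime C M"
proof (induction a)
  case 0 then show ?case by (intro exI[of _ 1]) simp
next
  case (Suc a)
  then obtain M where M: "yn (2^a*d) = yn d * M" "coprime C M" by blast
  define m where "m = 2^a*d"
  have e: "2^Suc a * d = 2*m" unfolding m_def by simp
  have Cy: "C dvd yn m" using M(1) assms(2) unfolding m_def by simp
  have "coprime C (xn m)"
  proof (rule coprimeI)
    fix c assume c: "c dvd C" "c dvd xn m"
    have "c dvd yn m" using c(1) Cy by (rule dvd_trans)
    then have "c dvd xn m^2 - 19 * yn m^2" using c(2) by (simp add: power2_eq_square)
    then show "is_unit c" using pell_eq[of m] by simp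
  qed
  moreover have "coprime C 2" using assms(1) by simp
  ultimately have "coprime C (2 * xn m * M)" using M(2) by simp
  moreover have "yn (2^Suc a*d) = yn d * (2 * xn m * M)" unfolding e pell_double
    using M(1) unfolding m_def by (simp add: algebra_simps)
  ultimately show ?case by blast
qed

lemma two_pow_odd: "n > 0 \<Longrightarrow> \<exists>a d. n = 2^a*d \<and> odd d" for n :: nat
proof (induction n rule: less_induct)
  case (less n)
  show ?case
  proof (cases "even n")
    case True
    then obtain m where m: "n = 2*m" by blast
    then have "m < n" "m > 0" using less.prems by auto
    then obtain a d where "m = 2^a*d" "odd d" using less.IH by blast
    then show ?thesis using m by (intro exI[of _ "Suc a"] exI[of _ d]) simp
  next
    case False then show ?thesis by (intro exI[of _ 0] exI[of _ n]) simp
  qed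
qed

theorem corollary5:
  fixes n :: nat
  assumes "n > 0"
    and "\<not> (\<exists>k::nat. n = 2 ^ k)"
    and "39 dvd yn n" and "representable (yn n div 39)"
  shows "\<exists>r s v u :: int.
           19 * 3^2 * (r^2 + r * s + 5 * s^2)^2 - 13^2 * (v^2 + v * u + 5 * u^2)^2 = 2
         \<and> (r \<noteq> 1 \<and> r \<noteq> -1 \<or> s \<noteq> 0)
         \<and> 39 * (r^2 + r * s + 5 * s^2) * (v^2 + v * u + 5 * u^2) dvd yn n"
proof -
  obtain a d where ad: "n = 2^a*d" "odd d" using two_pow_odd assms(1) by blast
  have "d \<noteq> 1" using assms(2) ad(1) by auto
  then obtain k where dk: "d = 2*(Suc k)+1" using ad(2)
    by (metis One_nat_def oddE add.commute add_0 mult_0_right not0_implies_Suc)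
  define A where "A = fst (AB (Suc k))"
  define B where "B = snd (AB (Suc k))"
  have yd: "yn d = 39 * A * B" using AB_y[of "Suc k"] unfolding dk A_def B_def by simp
  have pe: "171 * A^2 - 169 * B^2 = 2" "odd A" "odd B" "A \<ge> 1" "B \<ge> 1"
    using AB_props[of "Suc k"] unfolding A_def B_def by auto
  have A339: "A \<ge> 339" using AB_big[of k] unfolding A_def by simp
  have cAB: "coprime A B" unfolding A_def B_def by (rule AB_coprime)
  obtain M where M: "yn n = yn d * M" "coprime (A*B) M"
    using tower[of "A*B" d a] pe yd ad(1) by auto
  have yM: "yn n = 39 * (A * B * M)" using M(1) yd by simp
  have "yn n > 0" using yn_pos assms(1) by blast
  moreover have ABp: "A*B > 0" using pe(4,5) by simp
  ultimately have "0 < (A*B) * M" using yM by simp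
  then have M0: "M > 0" using ABp zero_less_mult_pos by blast
  have "R (A*B*M)" using assms(4) yM unfolding representable_def R_def by simp
  have RA: "R A"
    by (rule L3[of "A*B*M" A "B*M"]) (use pe M0 cAB M(2) \<open>R (A*B*M)\<close> in auto)
  have RB: "R B"
    by (rule L3[of "A*B*M" B "A*M"]) (use pe M0 cAB M(2) \<open>R (A*B*M)\<close> in \<open>auto simp: coprime_commute\<close>)
  obtain r s where rs: "A = r^2 + r*s + 5*s^2" using RA R_def by blast
  obtain v u where vu: "B = v^2 + v*u + 5*u^2" using RB R_def by blast
  have "19 * 3^2 * A^2 - 13^2 * B^2 = 2" using pe(1) by simp
  moreover have "r \<noteq> 1 \<and> r \<noteq> -1 \<or> s \<noteq> 0" using A339 rs by auto
  moreover have "39 * A * B dvd yn n" using yM by (simp add: mult.assoc)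
  ultimately show ?thesis unfolding rs vu by blast
qed

end
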